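(* Let $X$ be a real Banach space, $T:X\rightrightarrows X^*$ monotone and $\mu>0$. The following are equivalent: (1) for every $\varepsilon>0$ and every $z_0\in X$, the norm closure of $R(T(\cdot+z_0)+\mu J_\varepsilon)$ equals $X^*$; (2) for every $\varepsilon>0$ and every $z_0\in X$, $R(T(\cdot+z_0)+\mu J_\varepsilon)=X^*$.
   Context: A point-to-set operator $T:X\rightrightarrows X^*$ is a subset $T\subset X\times X^*$ with $T(x)=\{x^*:(x,x^* )\in T\}$; it is monotone if $\langle x-y,x^*-y^*\rangle\ge0$ for all $(x,x^* ),(y,y^* )\in T$. For $\varepsilon\ge0$, $J_\varepsilon(x)=\{x^*\in X^*:\ \tfrac12\|x\|^2+\tfrac12\|x^*\|^2\le\langle x,x^*\rangle+\varepsilon\}$. For $z_0\in X$, $T(\cdot+z_0)+\mu J_\varepsilon$ denotes the operator $x\mapsto\{a^*+\mu b^*: a^*\in T(x+z_0),\ b^*\in J_\varepsilon(x)\}$, and $R(S)=\bigcup_{x\in X}S(x)$ denotes the range of an operator $S$. *)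

theory Defs
  imports "HOL-Analysis.Analysis"
begin

(* The real Banach space X is a type of class banach; its dual X* is the type
  of bounded linear functionals ('a blinfun to real) with the operator norm. *)

type_synonym 'a opr = "('a \<times> ('a \<Rightarrow>\<^sub>L real)) set"

definition op_app :: "'a opr \<Rightarrow> 'a \<Rightarrow> ('a \<Rightarrow>\<^sub>L real) set" where
  "op_app T x = {xs. (x, xs) \<in> T}"

definition monotone_op :: "('a::real_normed_vector) opr \<Rightarrow> bool" where
  "monotone_op T \<longleftrightarrow>
     (\<forall>x xs y ys. (x, xs) \<in> T \<longrightarrow> (y, ys) \<in> T \<longrightarrow> 0 \<le> blinfun_apply (xs - ys) (x - y))"

definition J_eps :: "real \<Rightarrow> 'a::real_normed_vector \<Rightarrow> ('a \<Rightarrow>\<^sub>L real) set" where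
  "J_eps \<epsilon> x = {xs. (1/2) * (norm x)\<^sup>2 + (1/2) * (norm xs)\<^sup>2 \<le> blinfun_apply xs x + \<epsilon>}"

definition shift_reg :: "'a::real_normed_vector opr \<Rightarrow> 'a \<Rightarrow> real \<Rightarrow> real \<Rightarrow> 'a \<Rightarrow> ('a \<Rightarrow>\<^sub>L real) set" where
  "shift_reg T z0 \<mu> \<epsilon> x = {as + \<mu> *\<^sub>R bs | as bs. as \<in> op_app T (x + z0) \<and> bs \<in> J_eps \<epsilon> x}"

definition op_range :: "('a \<Rightarrow> 'b set) \<Rightarrow> 'b set" where
  "op_range S = (\<Union>x. S x)"

end

theory Submission
  imports Defs
begin

lemma quad_bound:
  fixes p q A B :: real
  assumes "0\<le>p" "0\<le>q" "0\<le>A" "0\<le>B" "p\<^sup>2/2 + q\<^sup>2/2 \<le> A*(p+q) + B"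
  shows "p \<le> 1+4*A+2*B \<and> q \<le> 1+4*A+2*B"
proof -
  define m where "m = max p q"
  have s0: "0 \<le> m" "p \<le> m" "q \<le> m" using assms by (auto simp: m_def)
  have a1: "m\<^sup>2/2 \<le> p\<^sup>2/2 + q\<^sup>2/2"
    using assms(1,2) by (auto simp: m_def max_def)
  have a2: "A * (p + q) \<le> A * (2 * m)" using s0 assms(3) by (intro mult_left_mono) auto
  have "m\<^sup>2/2 \<le> A * (2 * m) + B" using a1 a2 assms(5) by linarith
  hence h: "m*m \<le> 4*A*m + 2*B" by (simp add: power2_eq_square algebra_simps)
  have "m \<le> 1+4*A+2*B"
  proof (cases "m \<le> 1")
    case True thus ?thesis using assms by linarith
  next
    case False
    hence "2*B \<le> 2*B*m" using assms(4) by (simp add: mult_le_cancel_left1)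
    hence "m*m \<le> (4*A+2*B)*m" using h by (simp add: algebra_simps)
    hence "m \<le> 4*A+2*B" using False by (simp add: mult_le_cancel_right)
    thus ?thesis by linarith
  qed
  thus ?thesis using s0 by linarith
qed

lemma key:
  fixes T :: "('a::real_normed_vector) opr"
  assumes mono: "monotone_op T" and mu: "\<mu> > 0" and ep: "\<epsilon> > 0"
    and cl: "closure (op_range (shift_reg T z0 \<mu> (\<epsilon>/2))) = UNIV"
  shows "y \<in> op_range (shift_reg T z0 \<mu> \<epsilon>)"
proof -
  let ?S = "op_range (shift_reg T z0 \<mu> (\<epsilon>/2))"
  have "y \<in> closure ?S" using cl by simp
  then obtain s0 where "s0 \<in> ?S" using closure_approachable[of y ?S] by (metis zero_less_one)
  then obtain x0 as0 where "as0 \<in> op_app T (x0 + z0)"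
    by (auto simp: op_range_def shift_reg_def)
  then obtain u us where uT: "(u, us) \<in> T" by (auto simp: op_app_def)
  define c where "c = norm (z0 - u)"
  define K where "K = norm (y - us) + 1"
  define A where "A = K/\<mu> + c"
  define B where "B = \<epsilon>/2 + K*c/\<mu>"
  define M where "M = 1+4*A+2*B"
  define L where "L = 2*M/\<mu> + 1/(2*\<mu>\<^sup>2)"
  have c0: "c \<ge> 0" and K0: "K \<ge> 1" using c_def K_def by auto
  have A0: "A \<ge> 0" using c0 K0 mu by (simp add: A_def)
  have B0: "B \<ge> 0" using c0 K0 mu ep by (simp add: B_def)
  have M0: "M \<ge> 0" using A0 B0 by (simp add: M_def)
  have L0: "L > 0" using M0 mu by (simp add: L_def add_nonneg_pos)
  define \<delta> where "\<delta> = min 1 (\<epsilon>/(2*L))"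
  have d0: "\<delta> > 0" using L0 ep by (simp add: \<delta>_def)
  have d1: "\<delta> \<le> 1" by (simp add: \<delta>_def)
  have dL: "\<delta> * L \<le> \<epsilon>/2"
  proof -
    have "\<delta> \<le> \<epsilon>/(2*L)" by (simp add: \<delta>_def)
    hence "\<delta> * L \<le> \<epsilon>/(2*L) * L" using L0 by (intro mult_right_mono) auto
    thus ?thesis using L0 by simp
  qed
  obtain s where sS: "s \<in> ?S" and ds: "dist s y < \<delta>"
    using closure_approachable[of y ?S] \<open>y \<in> closure ?S\<close> d0 by blast
  then obtain x as bs where asT: "as \<in> op_app T (x + z0)" and bsJ: "bs \<in> J_eps (\<epsilon>/2) x"
    and seq: "s = as + \<mu> *\<^sub>R bs"
    by (auto simp: op_range_def shift_reg_def)
  define d where "d = y - s"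
  have nd: "norm d < \<delta>" using ds by (simp add: d_def dist_norm norm_minus_commute)
  define p where "p = norm x"
  define q where "q = norm bs"
  have p0: "p \<ge> 0" and q0: "q \<ge> 0" by (auto simp: p_def q_def)
  have Jb: "p\<^sup>2/2 + q\<^sup>2/2 \<le> blinfun_apply bs x + \<epsilon>/2"
    using bsJ by (simp add: J_eps_def p_def q_def)
  define w where "w = x + z0 - u"
  have monoineq: "0 \<le> blinfun_apply (as - us) w"
    using mono asT uT by (simp add: monotone_op_def op_app_def w_def)
  have aseq: "as = (y - us - d) + us - \<mu> *\<^sub>R bs" by (simp add: d_def seq)
  have "blinfun_apply (as - us) w = blinfun_apply (y - us - d) w - \<mu> * blinfun_apply bs w"
    by (subst aseq) (simp add: blinfun.diff_left blinfun.add_left blinfun.scaleR_left)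
  hence h1: "\<mu> * blinfun_apply bs w \<le> blinfun_apply (y - us - d) w" using monoineq by linarith
  have "blinfun_apply (y - us - d) w \<le> norm (y - us - d) * norm w"
    by (metis abs_le_D1 norm_blinfun real_norm_def)
  also have "norm (y - us - d) \<le> K"
    using norm_triangle_ineq4[of "y - us" d] nd d1 by (simp add: K_def)
  hence "norm (y - us - d) * norm w \<le> K * norm w" by (simp add: mult_right_mono)
  also have "norm w \<le> p + c" unfolding w_def p_def c_def
    using norm_triangle_ineq[of x "z0 - u"] by (simp add: add_diff_eq)
  hence "K * norm w \<le> K * (p + c)" using K0 by (simp add: mult_left_mono)
  finally have h2: "\<mu> * blinfun_apply bs w \<le> K * (p + c)" using h1 by linarith
  have bw: "blinfun_apply bs w = blinfun_apply bs x + blinfun_apply bs (z0 - u)"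
    by (simp add: w_def blinfun.add_right blinfun.diff_right algebra_simps)
  have "- blinfun_apply bs (z0 - u) \<le> q * c"
    unfolding q_def c_def by (metis abs_le_D2 norm_blinfun real_norm_def)
  hence "\<mu> * (- blinfun_apply bs (z0 - u)) \<le> \<mu> * (q * c)" using mu by (intro mult_left_mono) auto
  hence "\<mu> * blinfun_apply bs x \<le> K*(p+c) + \<mu>*(q*c)" using h2 bw
    by (simp add: algebra_simps)
  hence "blinfun_apply bs x \<le> K*(p+c)/\<mu> + q*c" using mu by (simp add: field_simps)
  moreover have "K*(p+c)/\<mu> = K/\<mu>*p + K*c/\<mu>" by (simp add: distrib_left add_divide_distrib)
  ultimately have "p\<^sup>2/2 + q\<^sup>2/2 \<le> K/\<mu>*p + c*q + B" using Jb unfolding B_def by (simp add: mult.commute)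
  moreover have "K/\<mu>*p + c*q \<le> A*(p+q)"
  proof -
    have k0: "K/\<mu> \<ge> 0" using K0 mu by simp
    have "K/\<mu>*p \<le> K/\<mu>*(p+q)" using k0 q0 by (intro mult_left_mono) auto
    moreover have "c*q \<le> c*(p+q)" using c0 p0 by (intro mult_left_mono) auto
    ultimately show ?thesis unfolding A_def by (simp add: distrib_right)
  qed
  ultimately have "p\<^sup>2/2 + q\<^sup>2/2 \<le> A*(p+q) + B" by linarith
  from quad_bound[OF p0 q0 A0 B0 this] have pM: "p \<le> M" and qM: "q \<le> M"
    by (auto simp: M_def)
  define b' where "b' = bs + (1/\<mu>) *\<^sub>R d"
  have yeq: "y = as + \<mu> *\<^sub>R b'" using mu by (simp add: b'_def d_def seq scaleR_add_right)
  define t where "t = norm b'"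
  have t0: "t \<ge> 0" by (simp add: t_def)
  have "t \<le> q + norm d / \<mu>" unfolding t_def b'_def q_def
    using norm_triangle_ineq[of bs "(1/\<mu>) *\<^sub>R d"] mu by simp
  hence tb: "t \<le> q + \<delta>/\<mu>" using nd mu by (smt (verit) divide_right_mono)
  hence "t\<^sup>2 \<le> (q + \<delta>/\<mu>)\<^sup>2" using t0 by (simp add: power_mono)
  hence t2: "t\<^sup>2 \<le> q\<^sup>2 + 2*(q*\<delta>/\<mu>) + \<delta>\<^sup>2/\<mu>\<^sup>2" by (simp add: power2_eq_square algebra_simps)
  have b'x: "blinfun_apply b' x = blinfun_apply bs x + blinfun_apply d x / \<mu>"
    by (simp add: b'_def blinfun.add_left blinfun.scaleR_left)
  have "- blinfun_apply d x \<le> norm d * p"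
    unfolding p_def by (metis abs_le_D2 norm_blinfun real_norm_def)
  also have "norm d * p \<le> \<delta> * p" using nd p0 by (simp add: mult_right_mono)
  finally have "(- blinfun_apply d x) / \<mu> \<le> \<delta> * p / \<mu>" using mu by (intro divide_right_mono) auto
  hence b'x2: "blinfun_apply bs x - \<delta>*p/\<mu> \<le> blinfun_apply b' x" using b'x by simp
  have e1: "q*\<delta>/\<mu> \<le> M*\<delta>/\<mu>" using qM d0 mu by (simp add: divide_right_mono mult_right_mono)
  have e2: "p*\<delta>/\<mu> \<le> M*\<delta>/\<mu>" using pM d0 mu by (simp add: divide_right_mono mult_right_mono)
  have e3: "\<delta>\<^sup>2 \<le> \<delta>" using d0 d1 by (simp add: power2_eq_square mult_le_cancel_left1)
  hence e3': "\<delta>\<^sup>2/(2*\<mu>\<^sup>2) \<le> \<delta>/(2*\<mu>\<^sup>2)" using mu by (simp add: divide_right_mono)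
  have "\<delta> * L = 2*(M*\<delta>/\<mu>) + \<delta>/(2*\<mu>\<^sup>2)" by (simp add: L_def algebra_simps)
  hence "q*\<delta>/\<mu> + p*\<delta>/\<mu> + \<delta>\<^sup>2/(2*\<mu>\<^sup>2) \<le> \<epsilon>/2" using e1 e2 e3' dL by linarith
  moreover have "\<delta>\<^sup>2/(2*\<mu>\<^sup>2) = (\<delta>\<^sup>2/\<mu>\<^sup>2)/2" by simp
  moreover have "\<delta>*p/\<mu> = p*\<delta>/\<mu>" by simp
  ultimately have "p\<^sup>2/2 + t\<^sup>2/2 \<le> blinfun_apply b' x + \<epsilon>"
    using Jb t2 b'x2 by linarith
  hence "b' \<in> J_eps \<epsilon> x" by (simp add: J_eps_def p_def t_def)
  hence "y \<in> shift_reg T z0 \<mu> \<epsilon> x" using yeq asT by (auto simp: shift_reg_def)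
  thus ?thesis by (auto simp: op_range_def)
qed

theorem mainTheorem2:
  fixes T :: "('a::banach) opr" and \<mu> :: real
  assumes "monotone_op T" and "\<mu> > 0"
  shows "(\<forall>\<epsilon>>0. \<forall>z0::'a. closure (op_range (shift_reg T z0 \<mu> \<epsilon>)) = UNIV)
     \<longleftrightarrow> (\<forall>\<epsilon>>0. \<forall>z0::'a. op_range (shift_reg T z0 \<mu> \<epsilon>) = UNIV)"
proof
  assume H: "\<forall>\<epsilon>>0. \<forall>z0::'a. closure (op_range (shift_reg T z0 \<mu> \<epsilon>)) = UNIV"
  show "\<forall>\<epsilon>>0. \<forall>z0::'a. op_range (shift_reg T z0 \<mu> \<epsilon>) = UNIV"
  proof (intro allI impI)
    fix \<epsilon> :: real and z0 :: 'a assume e: "\<epsilon> > 0"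
    have "closure (op_range (shift_reg T z0 \<mu> (\<epsilon>/2))) = UNIV" using H e by simp
    thus "op_range (shift_reg T z0 \<mu> \<epsilon>) = UNIV"
      using key[OF assms e] by blast
  qed
next
  assume "\<forall>\<epsilon>>0. \<forall>z0::'a. op_range (shift_reg T z0 \<mu> \<epsilon>) = UNIV"
  thus "\<forall>\<epsilon>>0. \<forall>z0::'a. closure (op_range (shift_reg T z0 \<mu> \<epsilon>)) = UNIV" by simp
qed

end
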